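(* For every real $x\ge0$, $$\left|Q_{odd}(x)-\frac4{\pi^2}x\right|\le\frac12\sqrt x+1\qquad\text{and}\qquad\left|Q_{odd}(x)-\frac4{\pi^2}x\right|\le\Big(\frac2{\pi^2}+\frac14\Big)\sqrt x+\frac14x^{1/4}+2.$$
   Context: $Q_{odd}(x)$ denotes the number of odd squarefree positive integers $n\le x$. *)

theory Defs
  imports "HOL-Analysis.Analysis" "HOL-Computational_Algebra.Squarefree"
begin

definition Q_odd :: "real \<Rightarrow> nat" where
  "Q_odd x = card {n::nat. 0 < n \<and> real n \<le> x \<and> odd n \<and> squarefree n}"

end

theory Submission
  imports Defs
begin
lemma odd_sq_has_sum: "((\<lambda>k::nat. 1 / (2 * real k + 1)^2) has_sum pi^2/8) UNIV"
proof -
  define f where "f = (\<lambda>n::nat. 1 / (real n + 1)^2)"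
  have hs: "(f has_sum pi^2/6) UNIV"
    unfolding f_def using inverse_squares_sums
    by (intro sums_nonneg_imp_has_sum) (auto simp: add.commute)
  hence sf: "f summable_on UNIV" by (auto simp: summable_on_def)
  define E where "E = {n::nat. even n}"
  define Od where "Od = {n::nat. odd n}"
  have bE: "bij_betw (\<lambda>k. 2*k) UNIV E" unfolding E_def
    by (rule bij_betwI[where g="\<lambda>n. n div 2"]) auto
  have bOd: "bij_betw (\<lambda>k. 2*k+1) UNIV Od" unfolding Od_def
    by (rule bij_betwI[where g="\<lambda>n. n div 2"]) auto
  have sE: "f summable_on E" and sOd: "f summable_on Od"
    using sf summable_on_subset_banach by blast+
  have "infsum f UNIV = infsum f E + infsum f Od"
    proof -
    have "UNIV = E \<union> Od" "E \<inter> Od = {}" by (auto simp: E_def Od_def)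
    thus ?thesis using infsum_Un_disjoint[OF sE sOd] by simp
  qed
  also have "infsum f E = infsum (\<lambda>k. f (2*k)) UNIV"
    using infsum_reindex_bij_betw[OF bE, of f] by simp
  also have "infsum f Od = infsum (\<lambda>k. f (2*k+1)) UNIV"
    using infsum_reindex_bij_betw[OF bOd, of f] by simp
  also have "(\<lambda>k. f (2*k+1)) = (\<lambda>k. (1/4) * f k)"
    by (auto simp: f_def field_simps power2_eq_square)
  also have "infsum (\<lambda>k. (1/4) * f k) UNIV = (1/4) * (pi^2/6)"
    using infsum_cmult_right hs infsumI by (metis sf)
  finally have "infsum (\<lambda>k. f (2*k)) UNIV = pi^2/8"
    using infsumI[OF hs] by simp
  moreover have "(\<lambda>k. f (2*k)) summable_on UNIV"
    using summable_on_reindex_bij_betw[OF bE] sE by blast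
  ultimately have "((\<lambda>k. f (2*k)) has_sum pi^2/8) UNIV"
    using has_sum_infsum by metis
  thus ?thesis by (simp add: f_def)
qed

definition mu :: "nat \<Rightarrow> real" where
  "mu d = (if squarefree d then (-1) ^ card (prime_factors d) else 0)"

lemma alt_sum_Pow_insert:
  assumes "finite A" "a \<notin> A"
  shows "(\<Sum>S\<in>Pow (insert a A). (-1::real) ^ card S) = 0"
proof -
  have "Pow (insert a A) = Pow A \<union> insert a ` Pow A" by (rule Pow_insert)
  moreover have "Pow A \<inter> insert a ` Pow A = {}" using assms(2) by auto
  moreover have "inj_on (insert a) (Pow A)" using assms(2) unfolding inj_on_def by (metis Diff_insert_absorb PowD subsetD)
  moreover have "\<And>S. S \<in> Pow A \<Longrightarrow> card (insert a S) = Suc (card S)"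
    using assms by (meson PowD card_insert_disjoint finite_subset subsetD)
  ultimately show ?thesis using assms(1)
    by (simp add: sum.union_disjoint sum.reindex sum_negf)
qed

lemma alt_sum_Pow:
  assumes "finite A" "A \<noteq> {}"
  shows "(\<Sum>S\<in>Pow A. (-1::real) ^ card S) = 0"
proof -
  obtain a where a: "a \<in> A" using assms by auto
  have "A = insert a (A - {a})" using a by auto
  thus ?thesis using alt_sum_Pow_insert[of "A - {a}" a] assms by simp
qed

lemma prime_factors_prod_primes:
  assumes "finite S" "\<And>p. p \<in> S \<Longrightarrow> prime (p::nat)"
  shows "prime_factors (\<Prod>S) = S"
proof -
  have "0 \<notin> id ` S" using assms(2) by (auto dest: prime_gt_0_nat)
  hence "prime_factors (\<Prod>S) = \<Union>((prime_factors \<circ> id) ` S)"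
    using prime_factors_prod[OF assms(1), of id] by simp
  also have "\<dots> = S" using assms(2) by (auto simp: prime_prime_factors)
  finally show ?thesis .
qed

lemma sqf_divisors_bij:
  assumes "n > (0::nat)"
  shows "bij_betw Prod (Pow (prime_factors n)) {d. d dvd n \<and> squarefree d}"
proof (rule bij_betw_imageI)
  show "inj_on Prod (Pow (prime_factors n))"
  proof (rule inj_onI)
    fix S T assume S: "S \<in> Pow (prime_factors n)" and T: "T \<in> Pow (prime_factors n)"
      and e: "\<Prod>S = \<Prod>T"
    have fS: "finite S" using S finite_subset by fastforce
    have fT: "finite T" using T finite_subset by fastforce
    have "S = prime_factors (\<Prod>S)" using S fS
      by (intro prime_factors_prod_primes[symmetric]) (auto intro: in_prime_factors_imp_prime)
    also have "\<dots> = prime_factors (\<Prod>T)" using e by simp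
    also have "\<dots> = T" using T fT
      by (intro prime_factors_prod_primes) (auto intro: in_prime_factors_imp_prime)
    finally show "S = T" .
  qed
next
  show "Prod ` Pow (prime_factors n) = {d. d dvd n \<and> squarefree d}"
  proof (intro equalityI subsetI)
    fix d assume "d \<in> Prod ` Pow (prime_factors n)"
    then obtain S where S: "S \<subseteq> prime_factors n" and d: "d = \<Prod>S" by auto
    have fS: "finite S" using S finite_subset by fastforce
    have pS: "\<And>p. p \<in> S \<Longrightarrow> prime p" using S by (auto intro: in_prime_factors_imp_prime)
    have "(\<Prod>p\<in>S. p) dvd (\<Prod>p\<in>S. p ^ multiplicity p n)"
      using S assms by (intro prod_dvd_prod) (auto simp: prime_factors_multiplicity)
    also have "\<dots> dvd (\<Prod>p\<in>prime_factors n. p ^ multiplicity p n)"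
      using S by (intro prod_dvd_prod_subset) auto
    also have "\<dots> = n" using assms by (subst prod_prime_factors) auto
    finally have "d dvd n" using d by simp
    moreover have "squarefree d" unfolding d
      by (rule squarefree_prod_coprime) (auto intro: primes_coprime squarefree_prime pS)
    ultimately show "d \<in> {d. d dvd n \<and> squarefree d}" by simp
  next
    fix d assume "d \<in> {d. d dvd n \<and> squarefree d}"
    hence dn: "d dvd n" and sq: "squarefree d" by auto
    have d0: "d \<noteq> 0" using dn assms by auto
    have m1: "\<And>p. p \<in> prime_factors d \<Longrightarrow> multiplicity p d = 1"
      using sq squarefree_factorial_semiring'[OF d0] by blast
    have "d = (\<Prod>p\<in>prime_factors d. p ^ multiplicity p d)"
      using d0 by (subst prod_prime_factors) auto
    also have "\<dots> = \<Prod>(prime_factors d)" using m1 by (intro prod.cong) auto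
    finally have "d = \<Prod>(prime_factors d)" .
    moreover have "prime_factors d \<subseteq> prime_factors n" using dn assms by (intro dvd_prime_factors) auto
    ultimately show "d \<in> Prod ` Pow (prime_factors n)" by blast
  qed
qed

lemma sum_mu_divisors:
  assumes "n > (0::nat)"
  shows "(\<Sum>d | d dvd n. mu d) = (if n = 1 then 1 else 0)"
proof -
  have fin: "finite {d. d dvd n}" using assms by (simp add: finite_divisors_nat)
  have "(\<Sum>d | d dvd n. mu d) = (\<Sum>d \<in> {d. d dvd n \<and> squarefree d}. mu d)"
    using fin by (intro sum.mono_neutral_right) (auto simp: mu_def)
  also have "\<dots> = (\<Sum>d \<in> {d. d dvd n \<and> squarefree d}. (-1) ^ card (prime_factors d))"
    by (intro sum.cong) (auto simp: mu_def)
  also have "\<dots> = (\<Sum>S \<in> Pow (prime_factors n). (-1) ^ card (prime_factors (\<Prod>S)))"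
    using sum.reindex_bij_betw[OF sqf_divisors_bij[OF assms], of "\<lambda>d. (-1::real) ^ card (prime_factors d)"]
    by simp
  also have "\<dots> = (\<Sum>S \<in> Pow (prime_factors n). (-1) ^ card S)"
  proof (intro sum.cong refl)
    fix S assume S: "S \<in> Pow (prime_factors n)"
    have fS: "finite S" using S finite_subset by fastforce
    have "prime_factors (\<Prod>S) = S" using S fS
      by (intro prime_factors_prod_primes) (auto intro: in_prime_factors_imp_prime)
    thus "(-1::real) ^ card (prime_factors (\<Prod>S)) = (-1) ^ card S" by simp
  qed
  also have "\<dots> = (if n = 1 then 1 else 0)"
  proof (cases "n = 1")
    case False
    hence "prime_factors n \<noteq> {}" using assms
      using prime_factorization_empty_iff[of n] by (simp add: set_mset_eq_empty_iff)
    thus ?thesis using False alt_sum_Pow[of "prime_factors n"] by simp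
  qed simp
  finally show ?thesis .
qed

lemma odd_inv_sq_has_sum: "((\<lambda>m::nat. 1 / (real m)^2) has_sum pi^2/8) {m. odd m}"
proof -
  have bOd: "bij_betw (\<lambda>k::nat. 2*k+1) UNIV {m. odd m}"
    by (rule bij_betwI[where g="\<lambda>n. n div 2"]) auto
  have "((\<lambda>k::nat. 1 / (real (2*k+1))^2) has_sum pi^2/8) UNIV"
    using odd_sq_has_sum by (simp add: add.commute)
  thus ?thesis using has_sum_reindex_bij_betw[OF bOd, of "\<lambda>m. 1 / (real m)^2"] by simp
qed

lemma mu_abs_le: "\<bar>mu d\<bar> \<le> 1"
  by (simp add: mu_def)

lemma mu_odd_abs_summable: "(\<lambda>d. norm (mu d / (real d)^2)) summable_on {m. odd m}"
proof (rule Infinite_Sum.abs_summable_on_comparison_test)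
  show "(\<lambda>m::nat. norm (1 / (real m)^2)) summable_on {m. odd m}"
    using odd_inv_sq_has_sum by (auto simp: summable_on_def)
  fix d :: nat
  show "norm (mu d / (real d)^2) \<le> norm (1 / (real d)^2)"
    using mu_abs_le[of d] by (simp add: divide_right_mono)
qed

lemma mu_odd_has_sum: "((\<lambda>d. mu d / (real d)^2) has_sum 8 / pi^2) {m. odd m}"
proof -
  define Od where "Od = {m::nat. odd m}"
  define a where "a = (\<lambda>d. mu d / (real d)^2)"
  define b where "b = (\<lambda>m::nat. 1 / (real m)^2)"
  define F where "F = (\<lambda>(d,m). a d * b m)"
  have hb: "(b has_sum pi^2/8) Od" using odd_inv_sq_has_sum by (simp add: b_def Od_def)
  have sb: "b summable_on Od" using hb by (auto simp: summable_on_def)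
  have ib: "infsum b Od = pi^2/8" using hb by (rule infsumI)
  have asa: "(\<lambda>d. norm (a d)) summable_on Od" using mu_odd_abs_summable by (simp add: a_def Od_def)
  have sa: "a summable_on Od" using asa abs_summable_summable by blast
  have nF: "norm (F (d,m)) = norm (a d) * b m" for d m
    by (simp add: F_def b_def abs_mult)
  have inner: "infsum (\<lambda>m. norm (F (d,m))) Od = norm (a d) * (pi^2/8)" for d
    unfolding nF using ib infsum_cmult_right sb by metis
  have asF: "(\<lambda>x. norm (F x)) summable_on Od \<times> Od"
  proof (subst Infinite_Sum.abs_summable_on_Sigma_iff, intro conjI ballI)
    fix d assume "d \<in> Od"
    show "(\<lambda>m. norm (F (d, m))) summable_on Od"
      unfolding nF using summable_on_cmult_right sb by blast
  next
    show "(\<lambda>d. norm (infsum (\<lambda>m. norm (F (d, m))) Od)) summable_on Od"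
      unfolding inner using summable_on_cmult_left[OF asa, of "pi^2/8"] by (simp add: mult.assoc)
  qed
  have sF: "F summable_on Od \<times> Od" using asF abs_summable_summable by blast
  have "infsum F (Od \<times> Od) = infsum (\<lambda>d. infsum (\<lambda>m. F (d,m)) Od) Od"
    using infsum_Sigma_banach[OF sF] by simp
  also have "\<dots> = infsum (\<lambda>d. a d * (pi^2/8)) Od"
    by (intro infsum_cong) (simp add: F_def infsum_cmult_right sb ib)
  also have "\<dots> = infsum a Od * (pi^2/8)"
    using infsum_cmult_left sa by metis
  finally have e1: "infsum F (Od \<times> Od) = infsum a Od * (pi^2/8)" .
  define g where "g = (\<lambda>(d::nat,m::nat). (d*m, d))"
  define H where "H = (\<lambda>(n::nat,d::nat). mu d / (real n)^2)"
  define Sg where "Sg = Sigma Od (\<lambda>n. {d. d dvd n})"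
  have bg: "bij_betw g (Od \<times> Od) Sg"
  proof (rule bij_betwI[where g="\<lambda>(n,d). (d, n div d)"])
    show "g \<in> Od \<times> Od \<rightarrow> Sg" by (auto simp: g_def Sg_def Od_def)
    show "(\<lambda>(n,d). (d, n div d)) \<in> Sg \<rightarrow> Od \<times> Od"
    proof
      fix y assume "y \<in> Sg"
      then obtain n d where y: "y = (n, d)" and n: "odd n" and dn: "d dvd n"
        by (auto simp: Sg_def Od_def)
      from dn obtain k where k: "n = d * k" by (auto elim: dvdE)
      have "odd d" "odd k" using n k by auto
      moreover have "d > 0" using \<open>odd d\<close> by (auto intro: odd_pos)
      ultimately show "(\<lambda>(n,d). (d, n div d)) y \<in> Od \<times> Od"
        using y k by (auto simp: Od_def)
    qed
    show "(\<lambda>(n,d). (d, n div d)) (g x) = x" if "x \<in> Od \<times> Od" for x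
      using that by (auto simp: g_def Od_def)
    show "g ((\<lambda>(n,d). (d, n div d)) y) = y" if "y \<in> Sg" for y
      using that by (auto simp: g_def Sg_def)
  qed
  have FH: "F x = H (g x)" if "x \<in> Od \<times> Od" for x
  proof -
    obtain d m where x: "x = (d, m)" by (cases x)
    have "mu d / (real d)^2 * (1 / (real m)^2) = mu d / (real d * real m)^2"
      by (simp add: power_mult_distrib)
    thus ?thesis unfolding x F_def H_def g_def a_def b_def by simp
  qed
  have "infsum F (Od \<times> Od) = infsum (\<lambda>x. H (g x)) (Od \<times> Od)"
    using FH by (intro infsum_cong) auto
  also have "\<dots> = infsum H Sg" by (rule infsum_reindex_bij_betw[OF bg])
  finally have e2: "infsum F (Od \<times> Od) = infsum H Sg" .
  have sH: "H summable_on Sg"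
  proof -
    have "(\<lambda>x. H (g x)) summable_on (Od \<times> Od)"
      using sF summable_on_cong[of "Od \<times> Od" F "\<lambda>x. H (g x)"] FH by simp
    thus ?thesis using summable_on_reindex_bij_betw[OF bg] by blast
  qed
  have "infsum H Sg = infsum (\<lambda>n. infsum (\<lambda>d. H (n,d)) {d. d dvd n}) Od"
    using infsum_Sigma_banach[of H Od "\<lambda>n. {d. d dvd n}"] sH by (simp add: Sg_def)
  also have "\<dots> = infsum (\<lambda>n. if n = 1 then 1 else 0) Od"
  proof (intro infsum_cong)
    fix n assume n: "n \<in> Od"
    hence n0: "n > 0" by (auto simp: Od_def intro: odd_pos)
    have fin: "finite {d. d dvd n}" using n0 by (simp add: finite_divisors_nat)
    have "infsum (\<lambda>d. H (n,d)) {d. d dvd n} = (\<Sum>d | d dvd n. mu d / (real n)^2)"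
      using fin by (simp add: H_def)
    also have "\<dots> = (\<Sum>d | d dvd n. mu d) / (real n)^2" by (simp add: sum_divide_distrib)
    also have "\<dots> = (if n = 1 then 1 else 0)" using sum_mu_divisors[OF n0] by simp
    finally show "infsum (\<lambda>d. H (n,d)) {d. d dvd n} = (if n = 1 then 1 else 0)" .
  qed
  also have "\<dots> = infsum (\<lambda>n. if n = 1 then 1 else 0) {1::nat}"
    by (intro infsum_cong_neutral) (auto simp: Od_def)
  also have "\<dots> = 1" by simp
  finally have "infsum a Od * (pi^2/8) = 1" using e1 e2 by simp
  hence "infsum a Od = 8 / pi^2" by (simp add: field_simps)
  hence "(a has_sum 8 / pi^2) Od" using has_sum_infsum[OF sa] by simp
  thus ?thesis by (simp add: a_def Od_def)
qed

definition Nodd :: "real \<Rightarrow> nat" where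
  "Nodd y = card {m::nat. odd m \<and> real m \<le> y}"

lemma Nodd_bound:
  assumes "y \<ge> 0"
  shows "\<bar>real (Nodd y) - y / 2\<bar> \<le> 1/2"
proof -
  define K where "K = nat \<lfloor>(y + 1) / 2\<rfloor>"
  have fl: "0 \<le> \<lfloor>(y + 1) / 2\<rfloor>" using assms by simp
  have rK: "real K = of_int \<lfloor>(y + 1) / 2\<rfloor>" using fl by (simp add: K_def)
  have K1: "real K \<le> (y + 1) / 2" using rK of_int_floor_le[of "(y+1)/2"] by linarith
  have K2: "(y + 1) / 2 < real K + 1" using rK real_of_int_floor_add_one_gt[of "(y+1)/2"] by linarith
  have eq: "{m::nat. odd m \<and> real m \<le> y} = (\<lambda>k. 2*k+1) ` {..<K}"
  proof (intro equalityI subsetI)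
    fix m assume "m \<in> {m::nat. odd m \<and> real m \<le> y}"
    then obtain k where m: "m = 2*k+1" and le: "real (2*k+1) \<le> y" by (auto elim: oddE)
    have "real k < real K" using le K2 by simp
    thus "m \<in> (\<lambda>k. 2*k+1) ` {..<K}" using m by auto
  next
    fix m assume "m \<in> (\<lambda>k. 2*k+1) ` {..<K}"
    then obtain k where m: "m = 2*k+1" and k: "k < K" by auto
    have "real k + 1 \<le> real K" using k by linarith
    hence "real (2*k+1) \<le> y" using K1 by simp
    thus "m \<in> {m::nat. odd m \<and> real m \<le> y}" using m by simp
  qed
  have "Nodd y = K" unfolding Nodd_def eq
    by (subst card_image) (auto simp: inj_on_def)
  thus ?thesis using K1 K2 unfolding abs_le_iff by simp
qed

lemma squarefree_iff_square_part:
  assumes "n \<noteq> (0::nat)"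
  shows "squarefree n \<longleftrightarrow> square_part n = 1"
proof -
  have "squarefree n \<longleftrightarrow> (\<forall>x. x dvd square_part n \<longrightarrow> x dvd 1)"
    by (simp add: squarefree_def dvd_square_part_iff)
  also have "\<dots> \<longleftrightarrow> square_part n dvd 1" by (meson dvd_refl dvd_trans)
  also have "\<dots> \<longleftrightarrow> square_part n = 1" by simp
  finally show ?thesis .
qed

lemma sqf_indicator:
  assumes "n > (0::nat)"
  shows "(if squarefree n then 1 else 0) = (\<Sum>d | d^2 dvd n. mu d)"
proof -
  have "square_part n \<noteq> 0" using assms by simp
  hence sp0: "square_part n > 0" by (metis gr0I)
  have "(\<Sum>d | d^2 dvd n. mu d) = (\<Sum>d | d dvd square_part n. mu d)"
    by (simp add: dvd_square_part_iff)
  also have "\<dots> = (if square_part n = 1 then 1 else 0)" by (rule sum_mu_divisors[OF sp0])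
  finally show ?thesis using squarefree_iff_square_part assms by simp
qed

lemma Q_odd_identity:
  assumes "x \<ge> 0"
  shows "real (Q_odd x) = (\<Sum>d | odd d \<and> real (d^2) \<le> x. mu d * real (Nodd (x / real (d^2))))"
proof -
  define A where "A = {n::nat. odd n \<and> real n \<le> x}"
  define B where "B = {d::nat. odd d \<and> real (d^2) \<le> x}"
  have finA: "finite A" unfolding A_def
    by (rule finite_subset[of _ "{..nat \<lfloor>x\<rfloor>}"]) (auto simp: le_nat_floor)
  have finB: "finite B" unfolding B_def
  proof (rule finite_subset[of _ "{..nat \<lfloor>x\<rfloor>}"])
    show "{d::nat. odd d \<and> real (d^2) \<le> x} \<subseteq> {..nat \<lfloor>x\<rfloor>}"
    proof
      fix d :: nat assume "d \<in> {d. odd d \<and> real (d^2) \<le> x}"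
      hence "real (d^2) \<le> x" by simp
      moreover have "d \<le> d^2" by (simp add: power2_eq_square le_square)
      ultimately have "real d \<le> x" by (meson of_nat_le_iff order_trans)
      thus "d \<in> {..nat \<lfloor>x\<rfloor>}" by (simp add: le_nat_floor)
    qed
  qed simp
  have "real (Q_odd x) = (\<Sum>n\<in>A. if squarefree n then 1 else 0)"
  proof -
    have "{n::nat. 0 < n \<and> real n \<le> x \<and> odd n \<and> squarefree n} = {n\<in>A. squarefree n}"
      by (auto simp: A_def intro: odd_pos)
    thus ?thesis using finA by (simp add: Q_odd_def sum.If_cases Int_def)
  qed
  also have "\<dots> = (\<Sum>n\<in>A. \<Sum>d\<in>{d\<in>B. d^2 dvd n}. mu d)"
  proof (intro sum.cong refl)
    fix n assume n: "n \<in> A"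
    hence n0: "n > 0" by (auto simp: A_def intro: odd_pos)
    have "{d\<in>B. d^2 dvd n} = {d. d^2 dvd n}"
    proof (intro equalityI subsetI)
      fix d assume d: "d \<in> {d. d^2 dvd n}"
      hence "d^2 \<le> n" using n0 by (simp add: dvd_imp_le)
      hence "real (d^2) \<le> real n" by (simp only: of_nat_le_iff)
      moreover have "real n \<le> x" using n by (simp add: A_def)
      ultimately have "real (d^2) \<le> x" by linarith
      moreover have "odd d"
      proof
        assume "even d"
        moreover have "d dvd n" using d by (metis dvd_trans dvd_triv_left power2_eq_square mem_Collect_eq)
        ultimately have "even n" by (meson dvd_trans)
        thus False using n by (simp add: A_def)
      qed
      ultimately show "d \<in> {d\<in>B. d^2 dvd n}" using d by (simp add: B_def)
    qed auto
    thus "(if squarefree n then 1 else 0) = (\<Sum>d\<in>{d\<in>B. d^2 dvd n}. mu d)"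
      using sqf_indicator[OF n0] by simp
  qed
  also have "\<dots> = (\<Sum>d\<in>B. \<Sum>n\<in>{n\<in>A. d^2 dvd n}. mu d)"
    by (rule sum.swap_restrict[OF finA finB])
  also have "\<dots> = (\<Sum>d\<in>B. mu d * real (Nodd (x / real (d^2))))"
  proof (intro sum.cong refl)
    fix d assume d: "d \<in> B"
    have d0: "d > 0" using d by (auto simp: B_def intro: odd_pos)
    have "{n\<in>A. d^2 dvd n} = (\<lambda>m. d^2 * m) ` {m. odd m \<and> real m \<le> x / real (d^2)}"
    proof (intro equalityI subsetI)
      fix n assume n: "n \<in> {n\<in>A. d^2 dvd n}"
      then obtain m where m: "n = d^2 * m" by (auto elim: dvdE)
      have "odd m" using n m by (auto simp: A_def)
      moreover have "real (d^2) * real m \<le> x" using n m by (auto simp: A_def)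
      hence "real m \<le> x / real (d^2)" using d0 by (simp add: field_simps)
      ultimately show "n \<in> (\<lambda>m. d^2 * m) ` {m. odd m \<and> real m \<le> x / real (d^2)}"
        using m by auto
    next
      fix n assume "n \<in> (\<lambda>m. d^2 * m) ` {m. odd m \<and> real m \<le> x / real (d^2)}"
      then obtain m where m: "n = d^2 * m" "odd m" "real m \<le> x / real (d^2)" by auto
      have "real (d^2) * real m \<le> x" using m(3) d0 by (simp add: field_simps)
      moreover have "odd d" using d by (simp add: B_def)
      ultimately show "n \<in> {n\<in>A. d^2 dvd n}" using m by (simp add: A_def)
    qed
    moreover have "inj (\<lambda>m. d^2 * m)" using d0 by (auto simp: inj_on_def)
    ultimately have "card {n\<in>A. d^2 dvd n} = Nodd (x / real (d^2))"
      unfolding Nodd_def by (simp add: card_image inj_on_subset)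
    thus "(\<Sum>n\<in>{n\<in>A. d^2 dvd n}. mu d) = mu d * real (Nodd (x / real (d^2)))"
      by (simp add: mult.commute)
  qed
  finally show ?thesis by (simp add: B_def)
qed

lemma tele_bound:
  assumes "k0 \<ge> (1::nat)"
  shows "(\<Sum>k\<in>{k0..<k0+n}. 1 / (2 * real k + 1)^2) \<le> 1 / (4 * real k0) - 1 / (4 * real (k0 + n))"
proof (induction n)
  case 0
  then show ?case by simp
next
  case (Suc n)
  define j where "j = k0 + n"
  have j1: "real j \<ge> 1" using assms by (simp add: j_def)
  have step: "1 / (2 * real j + 1)^2 \<le> 1 / (4 * real j) - 1 / (4 * real (Suc j))"
  proof -
    have "1 / (4 * real j) - 1 / (4 * real (Suc j)) = 1 / (4 * real j * (real j + 1))"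
      using j1 by (simp add: field_simps)
    also have "1 / (2 * real j + 1)^2 \<le> \<dots>"
    proof -
      have le: "4 * real j * (real j + 1) \<le> (2 * real j + 1)^2"
        by (simp add: power2_eq_square algebra_simps)
      have pos: "0 < 4 * real j * (real j + 1)" using j1 by simp
      have pos2: "0 < (2 * real j + 1)^2" using j1 by simp
      show ?thesis by (rule divide_left_mono[OF le]) (use pos pos2 in auto)
    qed
    finally show ?thesis .
  qed
  have "(\<Sum>k\<in>{k0..<k0+Suc n}. 1 / (2 * real k + 1)^2)
        = (\<Sum>k\<in>{k0..<k0+n}. 1 / (2 * real k + 1)^2) + 1 / (2 * real j + 1)^2"
    by (simp add: j_def)
  also have "\<dots> \<le> 1 / (4 * real k0) - 1 / (4 * real (k0 + n)) + (1 / (4 * real j) - 1 / (4 * real (Suc j)))"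
    using Suc.IH step by linarith
  also have "\<dots> = 1 / (4 * real k0) - 1 / (4 * real (k0 + Suc n))"
    by (simp add: j_def)
  finally show ?case .
qed

lemma tail_bound:
  assumes y: "y \<ge> 1"
  shows "infsum (\<lambda>d::nat. 1 / (real d)^2) {d. odd d \<and> y < real d} \<le> (y + 3) / (2 * y^2)"
proof -
  define k0 where "k0 = nat \<lfloor>(y - 1) / 2\<rfloor> + 1"
  have fl: "0 \<le> \<lfloor>(y - 1) / 2\<rfloor>" using y by simp
  have rk0: "real k0 = of_int \<lfloor>(y - 1) / 2\<rfloor> + 1" using fl by (simp add: k0_def)
  have k01: "k0 \<ge> 1" by (simp add: k0_def)
  have "(y - 1) / 2 < real k0"
    using rk0 real_of_int_floor_add_one_gt[of "(y-1)/2"] by simp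
  hence k0gt: "2 * real k0 > y - 1" by simp
  have kge: "k \<ge> k0" if "y < real (2*k+1)" for k
  proof -
    have "(y - 1) / 2 < real k" using that by simp
    hence "\<lfloor>(y - 1) / 2\<rfloor> < int k" by (simp add: floor_less_iff)
    hence "nat \<lfloor>(y - 1) / 2\<rfloor> < k" using fl by (simp add: nat_less_iff)
    thus ?thesis unfolding k0_def by simp
  qed
  have sO: "(\<lambda>d::nat. 1 / (real d)^2) summable_on {d. odd d}"
    using odd_inv_sq_has_sum by (auto simp: summable_on_def)
  have sS: "(\<lambda>d::nat. 1 / (real d)^2) summable_on {d. odd d \<and> y < real d}"
    by (rule summable_on_subset_banach[OF sO]) auto
  have "infsum (\<lambda>d::nat. 1 / (real d)^2) {d. odd d \<and> y < real d} \<le> 1 / (4 * real k0)"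
  proof (rule infsum_le_finite_sums[OF sS])
    fix F assume F: "finite F" "F \<subseteq> {d. odd d \<and> y < real d}"
    obtain M where M: "\<And>d. d \<in> F \<Longrightarrow> d < M" using F(1) finite_nat_bounded by blast
    have sub: "F \<subseteq> (\<lambda>k. 2*k+1) ` {k0..<k0+M}"
    proof
      fix d assume d: "d \<in> F"
      have "odd d" using d F(2) by auto
      then obtain k where k: "d = 2*k+1" by (metis oddE)
      have "y < real (2*k+1)" using d k F(2) by auto
      hence "k \<ge> k0" by (rule kge)
      moreover have "k < k0 + M" using M[OF d] k by simp
      ultimately show "d \<in> (\<lambda>k. 2*k+1) ` {k0..<k0+M}" using k by auto
    qed
    have "sum (\<lambda>d::nat. 1 / (real d)^2) F \<le> sum (\<lambda>d::nat. 1 / (real d)^2) ((\<lambda>k. 2*k+1) ` {k0..<k0+M})"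
      by (rule sum_mono2[OF _ sub]) auto
    also have "\<dots> = (\<Sum>k\<in>{k0..<k0+M}. 1 / (2 * real k + 1)^2)"
      by (subst sum.reindex) (auto simp: inj_on_def add.commute)
    also have "\<dots> \<le> 1 / (4 * real k0) - 1 / (4 * real (k0 + M))" by (rule tele_bound[OF k01])
    also have "\<dots> \<le> 1 / (4 * real k0)" by simp
    finally show "sum (\<lambda>d::nat. 1 / (real d)^2) F \<le> 1 / (4 * real k0)" .
  qed
  also have "1 / (4 * real k0) \<le> (y + 3) / (2 * y^2)"
  proof -
    have k0pos: "real k0 \<ge> 1" using k01 by simp
    have "y^2 \<le> 2 * real k0 * (y + 3)"
    proof (cases "2 * y \<ge> 3")
      case True
      have "y^2 \<le> (y - 1) * (y + 3)" using True by (simp add: power2_eq_square algebra_simps)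
      also have "\<dots> \<le> 2 * real k0 * (y + 3)" using k0gt y by (intro mult_right_mono) auto
      finally show ?thesis .
    next
      case False
      have "y * y \<le> y * 2" using False y by (intro mult_left_mono) auto
      hence "y^2 \<le> 2 * (y + 3)" using y unfolding power2_eq_square by (smt (verit))
      also have "\<dots> \<le> 2 * real k0 * (y + 3)" using k0pos y by (intro mult_right_mono) auto
      finally show ?thesis .
    qed
    thus ?thesis using k0pos y by (simp add: field_simps)
  qed
  finally show ?thesis .
qed

lemma sq_le_iff_le_sqrt:
  assumes "x \<ge> 0"
  shows "real (d^2) \<le> x \<longleftrightarrow> real d \<le> sqrt x"
proof
  assume "real (d^2) \<le> x"
  hence "(real d)^2 \<le> x" by simp
  thus "real d \<le> sqrt x" by (rule real_le_rsqrt)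
next
  assume "real d \<le> sqrt x"
  hence "(real d)^2 \<le> (sqrt x)^2" by (intro power_mono) auto
  thus "real (d^2) \<le> x" using assms by simp
qed

lemma core_bound:
  assumes x1: "x \<ge> 1"
  shows "\<bar>real (Q_odd x) - 4 / pi^2 * x\<bar> \<le> 1/2 * real (Q_odd (sqrt x)) + (sqrt x + 3) / 4"
proof -
  have x0: "x \<ge> 0" using x1 by simp
  define Od where "Od = {d::nat. odd d}"
  define D where "D = {d::nat. odd d \<and> real (d^2) \<le> x}"
  define a where "a = (\<lambda>d::nat. mu d / (real d)^2)"
  define T where "T = infsum a (Od - D)"
  define y where "y = sqrt x"
  have y1: "y \<ge> 1" using x1 by (simp add: y_def)
  have xy: "x = y^2" using x0 by (simp add: y_def)
  have finD: "finite D" unfolding D_def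
  proof (rule finite_subset[of _ "{..nat \<lfloor>x\<rfloor>}"])
    show "{d::nat. odd d \<and> real (d^2) \<le> x} \<subseteq> {..nat \<lfloor>x\<rfloor>}"
    proof
      fix d :: nat assume "d \<in> {d. odd d \<and> real (d^2) \<le> x}"
      hence "real (d^2) \<le> x" by simp
      moreover have "d \<le> d^2" by (simp add: power2_eq_square le_square)
      ultimately have "real d \<le> x" by (meson of_nat_le_iff order_trans)
      thus "d \<in> {..nat \<lfloor>x\<rfloor>}" by (simp add: le_nat_floor)
    qed
  qed simp
  have DO: "D \<subseteq> Od" by (auto simp: D_def Od_def)
  have ha: "(a has_sum 8 / pi^2) Od" using mu_odd_has_sum by (simp add: a_def Od_def)
  have hD: "(a has_sum sum a D) D" using finD by (simp add: has_sum_finiteI)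
  have "(a has_sum (8 / pi^2 - sum a D)) (Od - D)" by (rule has_sum_Diff[OF ha hD DO])
  hence Tval: "T = 8 / pi^2 - sum a D" unfolding T_def by (rule infsumI)
  have OD: "Od - D = {d. odd d \<and> y < real d}"
  proof -
    have "d \<in> Od - D \<longleftrightarrow> d \<in> {d. odd d \<and> y < real d}" for d
    proof -
      have "d \<in> Od - D \<longleftrightarrow> odd d \<and> \<not> real (d^2) \<le> x" unfolding Od_def D_def by blast
      also have "\<dots> \<longleftrightarrow> odd d \<and> \<not> real d \<le> y" using sq_le_iff_le_sqrt[OF x0, of d] by (simp add: y_def)
      also have "\<dots> \<longleftrightarrow> d \<in> {d. odd d \<and> y < real d}" by (simp add: not_le)
      finally show ?thesis .
    qed
    thus ?thesis by blast
  qed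
  have Tabs: "\<bar>T\<bar> \<le> (y + 3) / (2 * y^2)"
  proof -
    have asa: "(\<lambda>d. norm (a d)) summable_on (Od - D)"
      using mu_odd_abs_summable unfolding a_def Od_def
      by (rule summable_on_subset_banach) auto
    have sb: "(\<lambda>d::nat. 1 / (real d)^2) summable_on (Od - D)"
    proof (rule summable_on_subset_banach[of _ "{m. odd m}"])
      show "(\<lambda>d::nat. 1 / (real d)^2) summable_on {m. odd m}"
        using odd_inv_sq_has_sum by (auto simp: summable_on_def)
    qed (auto simp: Od_def)
    have "\<bar>T\<bar> = norm (infsum a (Od - D))" by (simp add: T_def)
    also have "\<dots> \<le> infsum (\<lambda>d. norm (a d)) (Od - D)" by (rule norm_infsum_bound[OF asa])
    also have "\<dots> \<le> infsum (\<lambda>d::nat. 1 / (real d)^2) (Od - D)"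
    proof (rule infsum_mono[OF asa sb])
      fix d show "norm (a d) \<le> 1 / (real d)^2"
        using mu_abs_le[of d] by (simp add: a_def divide_right_mono)
    qed
    also have "\<dots> \<le> (y + 3) / (2 * y^2)" unfolding OD by (rule tail_bound[OF y1])
    finally show ?thesis .
  qed
  have main: "real (Q_odd x) - 4 / pi^2 * x
      = (\<Sum>d\<in>D. mu d * (real (Nodd (x / real (d^2))) - x / real (d^2) / 2)) - x / 2 * T"
  proof -
    have "(\<Sum>d\<in>D. mu d * (real (Nodd (x / real (d^2))) - x / real (d^2) / 2))
        = (\<Sum>d\<in>D. mu d * real (Nodd (x / real (d^2)))) - x / 2 * sum a D"
    proof -
      have "mu d * (real (Nodd (x / real (d^2))) - x / real (d^2) / 2)
          = mu d * real (Nodd (x / real (d^2))) - x / 2 * a d" for d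
        unfolding a_def of_nat_power by (simp add: right_diff_distrib mult.commute)
      hence "(\<Sum>d\<in>D. mu d * (real (Nodd (x / real (d^2))) - x / real (d^2) / 2))
          = (\<Sum>d\<in>D. mu d * real (Nodd (x / real (d^2))) - x / 2 * a d)" by simp
      also have "\<dots> = (\<Sum>d\<in>D. mu d * real (Nodd (x / real (d^2)))) - (\<Sum>d\<in>D. x / 2 * a d)"
        by (rule sum_subtractf)
      also have "(\<Sum>d\<in>D. x / 2 * a d) = x / 2 * sum a D" by (rule sum_distrib_left[symmetric])
      finally show ?thesis .
    qed
    moreover have "real (Q_odd x) = (\<Sum>d\<in>D. mu d * real (Nodd (x / real (d^2))))"
      using Q_odd_identity[OF x0] by (simp add: D_def)
    ultimately show ?thesis using Tval by (simp add: right_diff_distrib)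
  qed
  have E1: "\<bar>\<Sum>d\<in>D. mu d * (real (Nodd (x / real (d^2))) - x / real (d^2) / 2)\<bar>
      \<le> 1/2 * real (Q_odd y)"
  proof -
    have "\<bar>\<Sum>d\<in>D. mu d * (real (Nodd (x / real (d^2))) - x / real (d^2) / 2)\<bar>
        \<le> (\<Sum>d\<in>D. \<bar>mu d * (real (Nodd (x / real (d^2))) - x / real (d^2) / 2)\<bar>)"
      by (rule sum_abs)
    also have "\<dots> \<le> (\<Sum>d\<in>D. (if squarefree d then 1/2 else 0))"
    proof (rule sum_mono)
      fix d assume "d \<in> D"
      have "\<bar>real (Nodd (x / real (d^2))) - x / real (d^2) / 2\<bar> \<le> 1/2"
        using Nodd_bound[of "x / real (d^2)"] x0 by simp
      thus "\<bar>mu d * (real (Nodd (x / real (d^2))) - x / real (d^2) / 2)\<bar> \<le> (if squarefree d then 1/2 else 0)"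
        by (simp add: mu_def abs_mult)
    qed
    also have "\<dots> = 1/2 * real (card {d\<in>D. squarefree d})"
      using finD by (simp add: sum.If_cases Int_def)
    also have "{d\<in>D. squarefree d} = {n::nat. 0 < n \<and> real n \<le> y \<and> odd n \<and> squarefree n}"
      using sq_le_iff_le_sqrt[OF x0] by (auto simp: D_def y_def intro: odd_pos)
    finally show ?thesis by (simp add: Q_odd_def)
  qed
  have E2: "\<bar>x / 2 * T\<bar> \<le> (y + 3) / 4"
  proof -
    have "\<bar>x / 2 * T\<bar> = x / 2 * \<bar>T\<bar>" using x0 by (simp add: abs_mult)
    also have "\<dots> \<le> x / 2 * ((y + 3) / (2 * y^2))" using Tabs x0 by (intro mult_left_mono) auto
    also have "\<dots> = (y + 3) / 4" using y1 by (simp add: xy field_simps power2_eq_square)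
    finally show ?thesis .
  qed
  have "\<bar>(\<Sum>d\<in>D. mu d * (real (Nodd (x / real (d^2))) - x / real (d^2) / 2)) - x / 2 * T\<bar>
      \<le> \<bar>\<Sum>d\<in>D. mu d * (real (Nodd (x / real (d^2))) - x / real (d^2) / 2)\<bar> + \<bar>x / 2 * T\<bar>"
    by (rule abs_triangle_ineq4)
  thus ?thesis unfolding main using E1 E2 unfolding y_def by linarith
qed


lemma Q_odd_le_half:
  assumes "y \<ge> 0"
  shows "real (Q_odd y) \<le> y / 2 + 1 / 2"
proof -
  have fin: "finite {m::nat. odd m \<and> real m \<le> y}"
    by (rule finite_subset[of _ "{..nat \<lfloor>y\<rfloor>}"]) (auto simp: le_nat_floor)
  have "Q_odd y \<le> Nodd y" unfolding Q_odd_def Nodd_def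
    by (rule card_mono[OF fin]) auto
  hence "real (Q_odd y) \<le> real (Nodd y)" by simp
  also have "\<dots> \<le> y / 2 + 1 / 2" using Nodd_bound[OF assms] unfolding abs_le_iff by linarith
  finally show ?thesis .
qed

lemma Q_odd_small:
  assumes "x < 1"
  shows "Q_odd x = 0"
proof -
  have e: "{n::nat. 0 < n \<and> real n \<le> x \<and> odd n \<and> squarefree n} = {}"
  proof (rule ccontr)
    assume "{n::nat. 0 < n \<and> real n \<le> x \<and> odd n \<and> squarefree n} \<noteq> {}"
    then obtain n :: nat where "0 < n" "real n \<le> x" by blast
    hence "real n \<ge> 1" "real n \<le> x" by auto
    thus False using assms by linarith
  qed
  show ?thesis unfolding Q_odd_def e by simp
qed

lemma small_main:
  assumes "0 \<le> x" "x < 1"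
  shows "\<bar>real (Q_odd x) - 4 / pi\<^sup>2 * x\<bar> \<le> 1"
proof -
  have "pi^2 \<ge> 3^2" using pi_gt3 by (intro power_mono) auto
  hence pi2: "pi^2 \<ge> 4" by simp
  have "4 / pi^2 * x \<le> 1 * 1"
  proof (rule mult_mono)
    show "4 / pi^2 \<le> 1" using pi2 by simp
  qed (use assms in auto)
  moreover have "0 \<le> 4 / pi^2 * x" using assms by simp
  moreover have "real (Q_odd x) = 0" using Q_odd_small[OF assms(2)] by simp
  ultimately show ?thesis unfolding abs_le_iff by linarith
qed

lemma arith_aux1:
  fixes A q s :: real
  assumes "\<bar>A\<bar> \<le> 1/2 * q + (s+3)/4" "q \<le> s/2 + 1/2"
  shows "\<bar>A\<bar> \<le> 1/2 * s + 1"
  using assms by (simp add: field_simps)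

lemma arith_aux2:
  fixes A q s c w :: real
  assumes "\<bar>A\<bar> \<le> 1/2 * q + (s+3)/4" "q \<le> c * s + 1/2 * w + 1"
  shows "\<bar>A\<bar> \<le> 1/2 * (c * s) + s/4 + 1/4 * w + 2"
  using assms by (simp add: field_simps)

lemma bound1:
  assumes "x \<ge> 0"
  shows "\<bar>real (Q_odd x) - 4 / pi\<^sup>2 * x\<bar> \<le> 1/2 * sqrt x + 1"
proof (cases "x < 1")
  case True
  thus ?thesis using small_main[OF assms True] real_sqrt_ge_zero[OF assms] by linarith
next
  case False
  hence x1: "x \<ge> 1" by simp
  have "real (Q_odd (sqrt x)) \<le> sqrt x / 2 + 1 / 2" using assms by (intro Q_odd_le_half) simp
  thus ?thesis by (rule arith_aux1[OF core_bound[OF x1]])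
qed

theorem lemma6:
  fixes x :: real
  assumes "x \<ge> 0"
  shows "\<bar>real (Q_odd x) - 4 / pi\<^sup>2 * x\<bar> \<le> 1/2 * sqrt x + 1
    \<and> \<bar>real (Q_odd x) - 4 / pi\<^sup>2 * x\<bar> \<le> (2 / pi\<^sup>2 + 1/4) * sqrt x + 1/4 * x powr (1/4) + 2"
proof
  show "\<bar>real (Q_odd x) - 4 / pi\<^sup>2 * x\<bar> \<le> 1/2 * sqrt x + 1" by (rule bound1[OF assms])
next
  have nn: "0 \<le> (2 / pi\<^sup>2 + 1/4) * sqrt x" "0 \<le> 1/4 * x powr (1/4)" using assms by auto
  show "\<bar>real (Q_odd x) - 4 / pi\<^sup>2 * x\<bar> \<le> (2 / pi\<^sup>2 + 1/4) * sqrt x + 1/4 * x powr (1/4) + 2"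
  proof (cases "x < 1")
    case True
    thus ?thesis using small_main[OF assms True] nn by linarith
  next
    case False
    hence x1: "x \<ge> 1" by simp
    have b: "\<bar>real (Q_odd (sqrt x)) - 4 / pi\<^sup>2 * sqrt x\<bar> \<le> 1/2 * sqrt (sqrt x) + 1"
      using assms by (intro bound1) simp
    have "sqrt (sqrt x) = (x powr (1/2)) powr (1/2)" using assms by (simp add: powr_half_sqrt)
    also have "\<dots> = x powr (1/4)" by (simp add: powr_powr)
    finally have ss: "sqrt (sqrt x) = x powr (1/4)" .
    have q: "real (Q_odd (sqrt x)) \<le> 4 / pi\<^sup>2 * sqrt x + 1/2 * x powr (1/4) + 1"
      using b unfolding ss abs_le_iff by linarith
    have eq: "(2 / pi\<^sup>2 + 1/4) * sqrt x = 1/2 * (4 / pi\<^sup>2 * sqrt x) + sqrt x / 4"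
      by (simp add: algebra_simps)
    show ?thesis unfolding eq by (rule arith_aux2[OF core_bound[OF x1] q])
  qed
qed

end
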